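(* There is a constant $\varepsilon_0\in(0,1)$ such that for every constant $\varepsilon\in(0,\varepsilon_0)$ the following holds. Consider the NSGA-II with population size $N=n+1$ optimizing \textsc{OneMinMax}, where the offspring population is generated by applying one-bit mutation once to each individual of $P_t$. If $|f(P_t)|\le(1-\varepsilon)(n+1)$, then, conditional on $P_t$, with probability at least $1-\exp(-\Omega(n))$ (the implicit constant depending only on $\varepsilon$, and $n$ sufficiently large), $$|f(R_t)|\le\left(1-\tfrac{1}{10}\varepsilon\left(\tfrac15\varepsilon-\tfrac2n\right)^{5/\varepsilon}\right)(n+1).$$
   Context: Search space $\{0,1\}^n$; objective $f=(f_1,f_2)$, both maximized. Populations are multisets of bit strings; for a population $P$, $f(P)=\{f(x):x\in P\}$. In iteration $t$ of the NSGA-II, $P_t$ is the parent population of size $N$, $Q_t$ the offspring population of size $N$ (here: one offspring of each individual of $P_t$, created independently by one-bit mutation, which flips exactly one uniformly random bit), and $R_t=P_t\cup Q_t$ (multiset union). \textsc{OneMinMax}: $f(x)=(n-\sum_{i=1}^n x_i,\ \sum_{i=1}^n x_i)$; its Pareto front is $\{(k,n-k):k\in\{0,\dots,n\}\}$, of size $n+1$. *)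

theory Defs
  imports "HOL-Probability.Probability"
begin

text \<open>Bit strings of length n are lists of booleans of length n.
  A population is a list of individuals (the multiset is mset of the list).\<close>

definition ones :: "bool list \<Rightarrow> nat" where
  "ones x = length (filter id x)"

definition OneMinMax :: "nat \<Rightarrow> bool list \<Rightarrow> nat \<times> nat" where
  "OneMinMax n x = (n - ones x, ones x)"

definition num_fvals :: "nat \<Rightarrow> bool list list \<Rightarrow> nat" where
  "num_fvals n P = card (OneMinMax n ` set P)"

definition one_bit_mutation :: "bool list \<Rightarrow> bool list pmf" where
  "one_bit_mutation x =
     map_pmf (\<lambda>i. x[i := \<not> x ! i]) (pmf_of_set {0..<length x})"

fun offspring :: "bool list list \<Rightarrow> bool list list pmf" where
  "offspring [] = return_pmf []"
| "offspring (x # xs) =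
     bind_pmf (one_bit_mutation x) (\<lambda>y.
     bind_pmf (offspring xs) (\<lambda>ys. return_pmf (y # ys)))"

end

theory Submission
  imports Defs
begin


lemma ones_card: "ones x = card {i. i < length x \<and> x ! i}"
  unfolding ones_def by (simp add: length_filter_conv_card)

lemma ones_le: "ones x \<le> length x"
  unfolding ones_def by simp

lemma ones_flip:
  assumes "i < length x"
  shows "ones (x[i := \<not> x ! i]) = (if x ! i then ones x - 1 else ones x + 1)"
proof -
  let ?S = "{j. j < length x \<and> x ! j}"
  have fin: "finite ?S" by simp
  have eq: "{j. j < length (x[i := \<not> x ! i]) \<and> x[i := \<not> x ! i] ! j} =
        (if x ! i then ?S - {i} else insert i ?S)"
    using assms by (auto simp: nth_list_update)
  show ?thesis
    unfolding ones_card eq using assms fin by (auto simp: card_insert_if)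
qed

lemma num_fvals_eq: "num_fvals n L = card (ones ` set L)"
proof -
  have "OneMinMax n ` set L = (\<lambda>m. (n - m, m)) ` (ones ` set L)"
    by (auto simp: OneMinMax_def image_image)
  moreover have "inj_on (\<lambda>m::nat. (n - m, m)) A" for A
    by (auto simp: inj_on_def)
  ultimately show ?thesis unfolding num_fvals_def by (simp add: card_image)
qed

lemma exp_bind_pmf:
  fixes f :: "'b \<Rightarrow> real"
  assumes "\<And>y. 0 \<le> f y" "\<And>y. f y \<le> 1"
  shows "measure_pmf.expectation (bind_pmf M N) f =
         measure_pmf.expectation M (\<lambda>x. measure_pmf.expectation (N x) f)"
proof -
  have int: "integrable (measure_pmf D) f" for D
    by (rule measure_pmf.integrable_const_bound[where B=1]) (use assms in auto)
  have nn: "0 \<le> measure_pmf.expectation (N x) f" for x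
    using assms by (simp add: integral_nonneg_AE)
  have le1: "measure_pmf.expectation (N x) f \<le> 1" for x
  proof -
    have "measure_pmf.expectation (N x) f \<le> measure_pmf.expectation (N x) (\<lambda>_. 1)"
      by (rule integral_mono) (use int assms in auto)
    then show ?thesis by simp
  qed
  have int2: "integrable (measure_pmf M) (\<lambda>x. measure_pmf.expectation (N x) f)"
    by (rule measure_pmf.integrable_const_bound[where B=1]) (use nn le1 in auto)
  have "ennreal (measure_pmf.expectation (bind_pmf M N) f) = (\<integral>\<^sup>+y. f y \<partial>bind_pmf M N)"
    by (rule nn_integral_eq_integral[symmetric]) (use int assms in auto)
  also have "\<dots> = (\<integral>\<^sup>+x. \<integral>\<^sup>+y. f y \<partial>N x \<partial>M)" by simp
  also have "\<dots> = (\<integral>\<^sup>+x. ennreal (measure_pmf.expectation (N x) f) \<partial>M)"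
    by (intro nn_integral_cong nn_integral_eq_integral) (use int assms in auto)
  also have "\<dots> = ennreal (measure_pmf.expectation M (\<lambda>x. measure_pmf.expectation (N x) f))"
    by (rule nn_integral_eq_integral) (use int2 nn in auto)
  finally show ?thesis using nn assms
    by (subst (asm) ennreal_inj) (auto intro: integral_nonneg_AE)
qed



lemma one_step:
  fixes D :: "'a pmf" and g :: "'a \<Rightarrow> nat" and c :: "nat \<Rightarrow> real"
  assumes "finite K" "\<And>k. 0 \<le> c k" "\<And>k. c k \<le> 1"
  shows "measure_pmf.expectation D (\<lambda>y. \<Prod>k\<in>K. (if g y \<noteq> k then 1 - c k else 1))
         \<le> (\<Prod>k\<in>K. (1 - c k * measure_pmf.prob D {y. g y \<noteq> k}))"
  using assms(1)
proof (induction K rule: finite_induct)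
  case empty
  then show ?case by simp
next
  case (insert k0 K)
  define F where "F y = (\<Prod>k\<in>K. (if g y \<noteq> k then 1 - c k else 1))" for y
  define R where "R = (\<Prod>k\<in>K. (1 - c k * measure_pmf.prob D {y. g y \<noteq> k}))"
  define C where "C = (\<Prod>k\<in>K. (1 - c k))"
  define p0 where "p0 = measure_pmf.prob D {y. g y = k0}"
  have F01: "0 \<le> F y \<and> F y \<le> 1" for y
    unfolding F_def using assms(2,3)
    by (auto intro!: prod_nonneg prod_le_1)
  have intF: "integrable (measure_pmf D) F"
    by (rule measure_pmf.integrable_const_bound[where B=1]) (use F01 in auto)
  have pt: "(if g y \<noteq> k0 then 1 - c k0 else 1) * F y =
      (1 - c k0) * F y + (c k0 * C) * indicator {y. g y = k0} y" for y
  proof (cases "g y = k0")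
    case True
    then have "F y = C" unfolding F_def C_def using insert.hyps(2)
      by (intro prod.cong) auto
    then show ?thesis using True by (simp add: algebra_simps)
  qed simp
  have "measure_pmf.expectation D (\<lambda>y. \<Prod>k\<in>insert k0 K. (if g y \<noteq> k then 1 - c k else 1))
      = measure_pmf.expectation D (\<lambda>y. (1 - c k0) * F y + (c k0 * C) * indicator {y. g y = k0} y)"
  proof -
    have "(\<lambda>y. \<Prod>k\<in>insert k0 K. (if g y \<noteq> k then 1 - c k else 1)) =
       (\<lambda>y. (if g y \<noteq> k0 then 1 - c k0 else 1) * F y)"
      using insert.hyps by (simp add: F_def)
    then show ?thesis by (simp only: pt)
  qed
  also have "\<dots> = (1 - c k0) * measure_pmf.expectation D F + (c k0 * C) * p0"
  proof -
    have ii: "integrable (measure_pmf D) (indicat_real {y. g y = k0})"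
      by (rule measure_pmf.integrable_const_bound[where B=1]) auto
    have "measure_pmf.expectation D (\<lambda>y. (1 - c k0) * F y + (c k0 * C) * indicator {y. g y = k0} y)
      = measure_pmf.expectation D (\<lambda>y. (1 - c k0) * F y) + measure_pmf.expectation D (\<lambda>y. (c k0 * C) * indicator {y. g y = k0} y)"
      by (rule Bochner_Integration.integral_add) (use intF ii in auto)
    also have "\<dots> = (1 - c k0) * measure_pmf.expectation D F + (c k0 * C) * p0"
      by (simp add: p0_def)
    finally show ?thesis .
  qed
  also have "\<dots> \<le> (1 - c k0) * R + (c k0 * R) * p0"
  proof (intro add_mono mult_left_mono mult_right_mono)
    show "measure_pmf.expectation D F \<le> R" using insert.IH unfolding F_def R_def .
    show "C \<le> R" unfolding C_def R_def using assms(2,3)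
      by (intro prod_mono) (auto simp: mult_le_cancel_left1 intro!: mult_left_le)
  qed (use assms(2,3) in \<open>auto simp: p0_def\<close>)
  also have "\<dots> = (1 - c k0 * (1 - p0)) * R" by (simp add: algebra_simps)
  also have "1 - p0 = measure_pmf.prob D {y. g y \<noteq> k0}"
  proof -
    have "{y. g y \<noteq> k0} = UNIV - {y. g y = k0}" by auto
    then show ?thesis unfolding p0_def using measure_pmf.prob_compl[of "{y. g y = k0}" D] by simp
  qed
  finally show ?case using insert.hyps by (simp add: R_def)
qed



definition pim :: "bool list \<Rightarrow> nat \<Rightarrow> real" where
  "pim x k = measure_pmf.prob (one_bit_mutation x) {y. ones y \<noteq> k}"

definition pil :: "bool list list \<Rightarrow> nat \<Rightarrow> real" where
  "pil P k = prod_list (map (\<lambda>x. pim x k) P)"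

lemma pil01: "0 \<le> pil P k \<and> pil P k \<le> 1"
  unfolding pil_def
  by (induction P) (auto simp: pim_def intro: mult_le_one)

lemma prod_if01:
  assumes "\<And>k. 0 \<le> a k \<and> a k \<le> 1"
  shows "0 \<le> (\<Prod>k\<in>K. (if P k then a k else 1)) \<and> (\<Prod>k\<in>K. (if P k then a k else 1)) \<le> (1::real)"
  using assms by (auto intro!: prod_nonneg prod_le_1)

lemma main_L:
  assumes "finite K" "\<And>k. 0 \<le> w k \<and> w k \<le> 1"
  shows "measure_pmf.expectation (offspring P)
           (\<lambda>Q. \<Prod>k\<in>K. (if k \<notin> ones ` set Q then 1 - w k else 1))
         \<le> (\<Prod>k\<in>K. (1 - w k * pil P k))"
  using assms(2)
proof (induction P arbitrary: w)
  case Nil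
  then show ?case by (simp add: pil_def)
next
  case (Cons x xs)
  define f where "f Q = (\<Prod>k\<in>K. (if k \<notin> ones ` set Q then 1 - w k else 1))" for Q
  have f01: "0 \<le> f Q \<and> f Q \<le> 1" for Q
    unfolding f_def by (rule prod_if01) (use Cons.prems in auto)
  define w' where "w' y k = (if ones y \<noteq> k then w k else 0)" for y k
  have w'01: "0 \<le> w' y k \<and> w' y k \<le> 1" for y k
    unfolding w'_def using Cons.prems by auto
  have f_cons: "f (y # ys) = (\<Prod>k\<in>K. (if k \<notin> ones ` set ys then 1 - w' y k else 1))" for y ys
    unfolding f_def w'_def by (intro prod.cong) auto
  define h where "h y = (\<Prod>k\<in>K. (if ones y \<noteq> k then 1 - w k * pil xs k else 1))" for y
  have h_eq: "(\<Prod>k\<in>K. (1 - w' y k * pil xs k)) = h y" for y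
    unfolding h_def w'_def by (intro prod.cong) auto
  have inner01: "0 \<le> measure_pmf.expectation (offspring xs) (\<lambda>ys. f (y # ys)) \<and>
       measure_pmf.expectation (offspring xs) (\<lambda>ys. f (y # ys)) \<le> 1" for y
  proof -
    have i: "integrable (measure_pmf (offspring xs)) (\<lambda>ys. f (y # ys))"
      by (rule measure_pmf.integrable_const_bound[where B=1]) (use f01 in auto)
    have "measure_pmf.expectation (offspring xs) (\<lambda>ys. f (y # ys)) \<le>
          measure_pmf.expectation (offspring xs) (\<lambda>ys. 1)"
      by (rule integral_mono) (use i f01 in auto)
    then show ?thesis using f01 by (auto intro: integral_nonneg_AE)
  qed
  have "measure_pmf.expectation (offspring (x # xs)) f
      = measure_pmf.expectation (one_bit_mutation x)
          (\<lambda>y. measure_pmf.expectation (offspring xs) (\<lambda>ys. f (y # ys)))"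
  proof -
    have "measure_pmf.expectation (offspring (x # xs)) f =
      measure_pmf.expectation (one_bit_mutation x)
          (\<lambda>y. measure_pmf.expectation (bind_pmf (offspring xs) (\<lambda>ys. return_pmf (y # ys))) f)"
      by (simp only: offspring.simps, rule exp_bind_pmf) (use f01 in auto)
    also have "\<dots> = measure_pmf.expectation (one_bit_mutation x)
          (\<lambda>y. measure_pmf.expectation (offspring xs) (\<lambda>ys. f (y # ys)))"
      by (subst exp_bind_pmf) (use f01 in auto)
    finally show ?thesis .
  qed
  also have "\<dots> \<le> measure_pmf.expectation (one_bit_mutation x) h"
  proof (rule integral_mono)
    show "integrable (measure_pmf (one_bit_mutation x))
       (\<lambda>y. measure_pmf.expectation (offspring xs) (\<lambda>ys. f (y # ys)))"
      by (rule measure_pmf.integrable_const_bound[where B=1]) (use inner01 in auto)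
    have h01: "0 \<le> h y \<and> h y \<le> 1" for y
      unfolding h_def by (rule prod_if01) (use Cons.prems pil01 in \<open>auto intro: mult_le_one\<close>)
    show "integrable (measure_pmf (one_bit_mutation x)) h"
      by (rule measure_pmf.integrable_const_bound[where B=1]) (use h01 in auto)
    fix y
    show "measure_pmf.expectation (offspring xs) (\<lambda>ys. f (y # ys)) \<le> h y"
      unfolding f_cons h_eq[symmetric] by (rule Cons.IH) (use w'01 in auto)
  qed
  also have "\<dots> \<le> (\<Prod>k\<in>K. (1 - (w k * pil xs k) * pim x k))"
    unfolding h_def pim_def
    by (rule one_step) (use assms(1) Cons.prems pil01 in \<open>auto intro: mult_le_one\<close>)
  also have "\<dots> = (\<Prod>k\<in>K. (1 - w k * pil (x # xs) k))"
    by (simp add: pil_def algebra_simps)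
  finally show ?case unfolding f_def .
qed



lemma ones_flip_T: "i < length x \<Longrightarrow> x ! i \<Longrightarrow> ones (x[i := False]) = ones x - 1"
  using ones_flip[of i x] by simp

lemma ones_flip_F: "i < length x \<Longrightarrow> \<not> x ! i \<Longrightarrow> ones (x[i := True]) = ones x + 1"
  using ones_flip[of i x] by simp

lemma ones_pos: "i < length x \<Longrightarrow> x ! i \<Longrightarrow> 1 \<le> ones x"
proof -
  assume a: "i < length x" "x ! i"
  have "finite {i. i < length x \<and> x ! i}" by simp
  moreover have "i \<in> {i. i < length x \<and> x ! i}" using a by simp
  ultimately have "card {i. i < length x \<and> x ! i} \<noteq> 0" by (auto simp: card_eq_0_iff)
  then show ?thesis unfolding ones_card by linarith
qed

lemma set_mut:
  assumes "length x = n" "0 < n" "y \<in> set_pmf (one_bit_mutation x)"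
  shows "length y = n"
  using assms by (auto simp: one_bit_mutation_def set_pmf_of_set)

lemma set_offspring:
  assumes "\<forall>x\<in>set P. length x = n" "0 < n" "Q \<in> set_pmf (offspring P)"
  shows "\<forall>y\<in>set Q. length y = n"
  using assms
proof (induction P arbitrary: Q)
  case Nil
  then show ?case by simp
next
  case (Cons x xs)
  then show ?case using set_mut[of x n] by auto
qed

lemma pim_calc:
  assumes "length x = n" "0 < n"
  shows "pim x k = real (card {i. i < n \<and> ones (x[i := \<not> x ! i]) \<noteq> k}) / real n"
proof -
  have "pim x k = measure_pmf.prob (pmf_of_set {0..<n}) ((\<lambda>i. x[i := \<not> x ! i]) -` {y. ones y \<noteq> k})"
    unfolding pim_def one_bit_mutation_def using assms by simp
  also have "\<dots> = real (card ({0..<n} \<inter> ((\<lambda>i. x[i := \<not> x ! i]) -` {y. ones y \<noteq> k}))) / real n"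
    using assms by (subst measure_pmf_of_set) auto
  also have "{0..<n} \<inter> ((\<lambda>i. x[i := \<not> x ! i]) -` {y. ones y \<noteq> k}) =
     {i. i < n \<and> ones (x[i := \<not> x ! i]) \<noteq> k}" by auto
  finally show ?thesis .
qed

lemma pim_up:
  assumes "length x = n" "0 < n" "ones x + 1 = k"
  shows "pim x k = real (ones x) / real n"
proof -
  have "{i. i < n \<and> ones (x[i := \<not> x ! i]) \<noteq> k} = {i. i < length x \<and> x ! i}"
  proof (rule set_eqI)
    fix i show "i \<in> {i. i < n \<and> ones (x[i := \<not> x ! i]) \<noteq> k} \<longleftrightarrow> i \<in> {i. i < length x \<and> x ! i}"
      using assms ones_flip[of i x] by (cases "x ! i") auto
  qed
  then show ?thesis using assms by (simp add: pim_calc ones_card)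
qed

lemma pim_down:
  assumes "length x = n" "0 < n" "ones x = k + 1"
  shows "pim x k = real (n - ones x) / real n"
proof -
  have "{i. i < n \<and> ones (x[i := \<not> x ! i]) \<noteq> k} = {0..<n} - {i. i < length x \<and> x ! i}"
  proof (rule set_eqI)
    fix i show "i \<in> {i. i < n \<and> ones (x[i := \<not> x ! i]) \<noteq> k} \<longleftrightarrow> i \<in> {0..<n} - {i. i < length x \<and> x ! i}"
      using assms ones_flip[of i x] ones_pos[of i x] by (cases "x ! i") auto
  qed
  moreover have "card ({0..<n} - {i. i < length x \<and> x ! i}) = n - ones x"
    using assms by (subst card_Diff_subset) (auto simp: ones_card)
  ultimately show ?thesis using assms by (simp add: pim_calc)
qed

lemma pim_other:
  assumes "length x = n" "0 < n" "ones x + 1 \<noteq> k" "ones x \<noteq> k + 1"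
  shows "pim x k = 1"
proof -
  have "{i. i < n \<and> ones (x[i := \<not> x ! i]) \<noteq> k} = {0..<n}"
  proof (rule set_eqI)
    fix i show "i \<in> {i. i < n \<and> ones (x[i := \<not> x ! i]) \<noteq> k} \<longleftrightarrow> i \<in> {0..<n}"
      using assms ones_flip[of i x] ones_pos[of i x] by (cases "x ! i") auto
  qed
  then show ?thesis using assms by (simp add: pim_calc)
qed

definition nbm :: "bool list list \<Rightarrow> nat \<Rightarrow> nat" where
  "nbm P k = length (filter (\<lambda>x. ones x + 1 = k \<or> ones x = k + 1) P)"

lemma pil_lower:
  assumes "\<forall>x\<in>set P. length x = n" "0 < n" "0 < b" "b \<le> 1"
    "b * real n \<le> real k - 1" "b * real n \<le> real n - real k - 1"
  shows "b ^ nbm P k \<le> pil P k"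
  using assms(1)
proof (induction P)
  case Nil
  then show ?case by (simp add: nbm_def pil_def)
next
  case (Cons x xs)
  have lx: "length x = n" using Cons.prems by simp
  have IH: "b ^ nbm xs k \<le> pil xs k" using Cons by simp
  have bp: "0 \<le> b ^ nbm xs k" using assms(3) by simp
  show ?case
  proof (cases "ones x + 1 = k \<or> ones x = k + 1")
    case True
    have "b \<le> pim x k"
    proof (cases "ones x + 1 = k")
      case True
      then have "pim x k = real (ones x) / real n" using pim_up lx assms(2) by blast
      moreover have "real (ones x) = real k - 1" using True by auto
      ultimately have "pim x k = (real k - 1) / real n" by simp
      then show ?thesis using assms(2,5) by (simp add: le_divide_eq mult.commute)
    next
      case False
      then have o: "ones x = k + 1" using \<open>ones x + 1 = k \<or> ones x = k + 1\<close> by blast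
      then have "pim x k = real (n - ones x) / real n" using pim_down lx assms(2) by blast
      moreover have "real (n - ones x) = real n - real k - 1"
        using o ones_le[of x] lx by auto
      ultimately have "pim x k = (real n - real k - 1) / real n" by simp
      then show ?thesis using assms(2,6) by (simp add: le_divide_eq mult.commute)
    qed
    then have "b * b ^ nbm xs k \<le> pim x k * pil xs k"
      using IH bp assms(3) by (intro mult_mono) (auto simp: pil01)
    then show ?thesis using True by (simp add: nbm_def pil_def)
  next
    case False
    then have "pim x k = 1" using pim_other lx assms(2) by blast
    then show ?thesis using False IH by (simp add: nbm_def pil_def)
  qed
qed



lemma nbm_cons: "nbm (x # P) k = (if ones x + 1 = k \<or> ones x = k + 1 then 1 else 0) + nbm P k"
  by (simp add: nbm_def)

lemma sum_nbm: "(\<Sum>k\<in>{0..n}. nbm P k) \<le> 2 * length P"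
proof (induction P)
  case Nil
  then show ?case by (simp add: nbm_def)
next
  case (Cons x P)
  have "(\<Sum>k\<in>{0..n}. (if ones x + 1 = k \<or> ones x = k + 1 then 1 else 0::nat))
      = card {k\<in>{0..n}. ones x + 1 = k \<or> ones x = k + 1}"
    by (simp add: sum.If_cases Int_def conj_commute)
  also have "\<dots> \<le> card {ones x + 1, ones x - 1}"
    by (rule card_mono) auto
  also have "\<dots> \<le> 2" by (simp add: card_insert_if)
  finally have "(\<Sum>k\<in>{0..n}. (if ones x + 1 = k \<or> ones x = k + 1 then 1 else 0::nat)) \<le> 2" .
  then show ?case using Cons by (simp add: nbm_cons sum.distrib)
qed

lemma count_H: "card {k\<in>{0..n}. T < nbm P k} * (T + 1) \<le> 2 * length P"
proof -
  let ?H = "{k\<in>{0..n}. T < nbm P k}"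
  have "card ?H * (T + 1) = (\<Sum>k\<in>?H. T + 1)" by simp
  also have "\<dots> \<le> (\<Sum>k\<in>?H. nbm P k)" by (rule sum_mono) auto
  also have "\<dots> \<le> (\<Sum>k\<in>{0..n}. nbm P k)" by (rule sum_mono2) auto
  also have "\<dots> \<le> 2 * length P" by (rule sum_nbm)
  finally show ?thesis .
qed

lemma count_E:
  fixes b :: real
  assumes "0 \<le> b"
  shows "real (card {k\<in>{0..n}. \<not> (b * real n \<le> real k - 1 \<and> b * real n \<le> real n - real k - 1)})
         \<le> 2 * b * real n + 4"
proof -
  define m where "m = nat \<lceil>b * real n + 1\<rceil>"
  have m: "real m \<le> b * real n + 2"
  proof -
    have "0 \<le> b * real n + 1" using assms by simp
    moreover have "b * real n + 1 \<le> real_of_int \<lceil>b * real n + 1\<rceil>" by (rule le_of_int_ceiling)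
    ultimately have c0: "0 \<le> \<lceil>b * real n + 1\<rceil>" by linarith
    have "real m = real_of_int \<lceil>b * real n + 1\<rceil>" unfolding m_def
      using of_nat_nat[OF c0] by (metis of_int_of_nat_eq)
    also have "\<dots> \<le> b * real n + 1 + 1" by (rule of_int_ceiling_le_add_one)
    finally show ?thesis by simp
  qed
  have sub: "{k\<in>{0..n}. \<not> (b * real n \<le> real k - 1 \<and> b * real n \<le> real n - real k - 1)}
      \<subseteq> {..<m} \<union> (\<lambda>j. n - j) ` {..<m}"
  proof
    fix k assume k: "k \<in> {k\<in>{0..n}. \<not> (b * real n \<le> real k - 1 \<and> b * real n \<le> real n - real k - 1)}"
    show "k \<in> {..<m} \<union> (\<lambda>j. n - j) ` {..<m}"
    proof (cases "real k - 1 < b * real n")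
      case True
      then have "k < m" unfolding m_def by linarith
      then show ?thesis by simp
    next
      case False
      then have "real n - real k - 1 < b * real n" using k by auto
      moreover have kn: "k \<le> n" using k by auto
      ultimately have "n - k < m" unfolding m_def by (simp add: of_nat_diff) linarith
      moreover have "k = n - (n - k)" using kn by simp
      ultimately show ?thesis by blast
    qed
  qed
  have "card {k\<in>{0..n}. \<not> (b * real n \<le> real k - 1 \<and> b * real n \<le> real n - real k - 1)}
      \<le> card ({..<m} \<union> (\<lambda>j. n - j) ` {..<m})"
    by (rule card_mono[OF _ sub]) auto
  also have "\<dots> \<le> card {..<m} + card ((\<lambda>j. n - j) ` {..<m})" by (rule card_Un_le)
  also have "\<dots> \<le> m + m" using card_image_le[of "{..<m}" "\<lambda>j. n - j"] by simp
  finally show ?thesis using m by linarith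
qed

lemma prod_if_const:
  assumes "finite K"
  shows "(\<Prod>k\<in>K. (if P k then (a::real) else 1)) = a ^ card {k\<in>K. P k}"
proof -
  have "(\<Prod>k\<in>K. (if P k then a else 1)) = (\<Prod>k\<in>{k\<in>K. P k}. a)"
    using assms by (subst prod.inter_filter[symmetric]) auto
  then show ?thesis by simp
qed



lemma core:
  fixes \<epsilon> :: real and n :: nat and P :: "bool list list"
  assumes e0: "0 < \<epsilon>" and e1: "\<epsilon> < 1/2" and Tdef: "T = nat \<lceil>4 / \<epsilon>\<rceil>"
    and nlarge: "20 / \<epsilon> \<le> real n"
    and lenP: "length P = n + 1" and lenx: "\<forall>x \<in> set P. length x = n"
    and fP: "real (num_fvals n P) \<le> (1 - \<epsilon>) * real (n + 1)"
  shows "measure_pmf.prob (offspring P)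
           {Q. real (num_fvals n (P @ Q))
                 \<le> (1 - \<epsilon> / 10 * (\<epsilon> / 5 - 2 / real n) powr (5 / \<epsilon>)) * real (n + 1)}
           \<ge> 1 - exp (- (\<epsilon> * (\<epsilon> / 10) ^ T / 40) * real n)"
proof -
  have npos: "0 < n"
  proof -
    have "0 < 20 / \<epsilon>" using e0 by simp
    then have "0 < real n" using nlarge by linarith
    then show ?thesis by simp
  qed
  have nr: "0 < real n" using npos by simp
  define b where "b = \<epsilon> / 5 - 2 / real n"
  have "20 \<le> \<epsilon> * real n" using nlarge e0 by (simp add: field_simps)
  then have "2 / real n \<le> \<epsilon> / 10" using nr by (simp add: field_simps)
  then have bl: "\<epsilon> / 10 \<le> b" and bu: "b \<le> \<epsilon> / 5" using nr unfolding b_def by auto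
  have bpos: "0 < b" using bl e0 by linarith
  have b1: "b < 1" using bu e1 by linarith
  have bn: "b * real n = \<epsilon> * real n / 5 - 2" unfolding b_def using nr by (simp add: field_simps)
  define S where "S = ones ` set P"
  have Ssub: "S \<subseteq> {0..n}" unfolding S_def using lenx ones_le by fastforce
  have cardS: "real (card S) \<le> (1 - \<epsilon>) * real (n + 1)"
    using fP unfolding S_def num_fvals_eq .
  define M where "M = {0..n} - S"
  have cardM_eq: "card M = (n + 1) - card S" unfolding M_def
    using Ssub by (subst card_Diff_subset) (auto intro: finite_subset)
  have cardSle: "card S \<le> n + 1" using card_mono[OF _ Ssub] by simp
  have cardM: "\<epsilon> * real (n + 1) \<le> real (card M)"
    using cardM_eq cardSle cardS by (simp add: of_nat_diff algebra_simps)
  define Ed where "Ed = {k\<in>{0..n}. \<not> (b * real n \<le> real k - 1 \<and> b * real n \<le> real n - real k - 1)}"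
  define H where "H = {k\<in>{0..n}. T < nbm P k}"
  define K where "K = M - Ed - H"
  have finK: "finite K" unfolding K_def M_def by auto
  have cardE: "real (card Ed) \<le> 2 * \<epsilon> * real n / 5"
  proof -
    have "real (card Ed) \<le> 2 * b * real n + 4" unfolding Ed_def by (rule count_E) (use bpos in auto)
    then show ?thesis using bn by linarith
  qed
  have cardH: "real (card H) \<le> \<epsilon> * real (n + 1) / 2"
  proof -
    have "card H * (T + 1) \<le> 2 * (n + 1)" using count_H[of n T P] lenP unfolding H_def by simp
    then have h1: "real (card H) * (real T + 1) \<le> 2 * real (n + 1)"
      by (metis of_nat_1 of_nat_add of_nat_le_iff of_nat_mult of_nat_numeral)
    have "4 / \<epsilon> \<le> real T" unfolding Tdef by linarith
    then have "4 \<le> \<epsilon> * (real T + 1)" using e0 by (simp add: field_simps)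
    then have "real (card H) * 4 \<le> real (card H) * (\<epsilon> * (real T + 1))"
      by (intro mult_left_mono) auto
    also have "\<dots> = \<epsilon> * (real (card H) * (real T + 1))" by (simp add: algebra_simps)
    also have "\<dots> \<le> \<epsilon> * (2 * real (n + 1))" using h1 e0 by (intro mult_left_mono) auto
    finally have "real (card H) * 4 \<le> \<epsilon> * (2 * real (n + 1))" .
    then show ?thesis by (simp add: algebra_simps)
  qed
  have cardK: "\<epsilon> * real (n + 1) / 10 \<le> real (card K)"
  proof -
    have "M \<subseteq> K \<union> Ed \<union> H" unfolding K_def by auto
    then have "card M \<le> card (K \<union> Ed \<union> H)" by (intro card_mono) (auto simp: K_def Ed_def H_def M_def)
    also have "\<dots> \<le> card K + card Ed + card H"
      by (metis add_le_mono1 card_Un_le le_trans)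
    finally have "real (card M) \<le> real (card K) + real (card Ed) + real (card H)" by linarith
    then show ?thesis using cardM cardE cardH e0 by (simp add: algebra_simps)
  qed
  define B where "B = b ^ T"
  have Bpos: "0 < B" unfolding B_def using bpos by simp
  have B1: "B \<le> 1" unfolding B_def using bpos b1 by (simp add: power_le_one)
  have pilK: "B \<le> pil P k" if k: "k \<in> K" for k
  proof -
    have kn: "k \<in> {0..n}" "k \<notin> Ed" "k \<notin> H" using k unfolding K_def M_def by auto
    then have c1: "b * real n \<le> real k - 1" "b * real n \<le> real n - real k - 1" "nbm P k \<le> T"
      unfolding Ed_def H_def by auto
    have "B \<le> b ^ nbm P k" unfolding B_def
      by (rule power_decreasing) (use c1 bpos b1 in auto)
    also have "\<dots> \<le> pil P k" by (rule pil_lower) (use lenx npos bpos b1 c1 in auto)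
    finally show ?thesis .
  qed
  define w :: real where "w = 1 - exp (-1)"
  have w1: "1/2 \<le> w" "w \<le> 1"
  proof -
    have "1 + 1 \<le> exp (1::real)" by (rule exp_ge_add_one_self)
    then have "exp (-1::real) \<le> 1/2" by (simp add: exp_minus field_simps)
    then show "1/2 \<le> w" unfolding w_def by simp
    show "w \<le> 1" unfolding w_def by simp
  qed
  define X where "X Q = card {k\<in>K. k \<notin> ones ` set Q}" for Q
  have intg: "(\<Prod>k\<in>K. (if k \<notin> ones ` set Q then 1 - w else 1)) = exp (- real (X Q))" for Q
    unfolding X_def w_def using finK
    by (simp add: prod_if_const exp_minus power_inverse exp_of_nat_mult[symmetric])
  have EX: "measure_pmf.expectation (offspring P) (\<lambda>Q. exp (- real (X Q)))
        \<le> exp (- (real (card K) * B / 2))"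
  proof -
    have "measure_pmf.expectation (offspring P) (\<lambda>Q. exp (- real (X Q)))
        = measure_pmf.expectation (offspring P) (\<lambda>Q. \<Prod>k\<in>K. (if k \<notin> ones ` set Q then 1 - w else 1))"
      by (simp add: intg)
    also have "\<dots> \<le> (\<Prod>k\<in>K. (1 - w * pil P k))"
      by (rule main_L[OF finK]) (use w1 in auto)
    also have "\<dots> \<le> (\<Prod>k\<in>K. exp (- (w * pil P k)))"
    proof (rule prod_mono)
      fix k assume "k \<in> K"
      have "0 \<le> 1 - w * pil P k" using w1 pil01[of P k] by (smt (verit) mult_le_one)
      moreover have "1 - w * pil P k \<le> exp (- (w * pil P k))"
        using exp_ge_add_one_self[of "- (w * pil P k)"] by simp
      ultimately show "0 \<le> 1 - w * pil P k \<and> 1 - w * pil P k \<le> exp (- (w * pil P k))" by simp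
    qed
    also have "\<dots> = exp (- (w * (\<Sum>k\<in>K. pil P k)))"
      by (simp add: exp_sum[symmetric, OF finK] sum_negf[symmetric] sum_distrib_left)
    also have "\<dots> \<le> exp (- (real (card K) * B / 2))"
    proof -
      have cb: "real (card K) * B \<le> (\<Sum>k\<in>K. pil P k)"
        using sum_mono[of K "\<lambda>_. B" "pil P", OF pilK] by simp
      moreover have "0 \<le> real (card K) * B" using Bpos by simp
      ultimately have "real (card K) * B / 2 \<le> w * (\<Sum>k\<in>K. pil P k)"
      proof -
        have s0: "0 \<le> (\<Sum>k\<in>K. pil P k)" using pil01 by (simp add: sum_nonneg)
        have "real (card K) * B / 2 \<le> 1/2 * (\<Sum>k\<in>K. pil P k)" using cb Bpos by simp
        also have "\<dots> \<le> w * (\<Sum>k\<in>K. pil P k)" using w1 s0 by (intro mult_right_mono) auto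
        finally show ?thesis .
      qed
      then show ?thesis by simp
    qed
    finally show ?thesis .
  qed
  define t0 where "t0 = \<epsilon> / 10 * b powr (5 / \<epsilon>) * real (n + 1)"
  define Bd where "Bd = {Q. \<not> real (num_fvals n (P @ Q))
                 \<le> (1 - \<epsilon> / 10 * (\<epsilon> / 5 - 2 / real n) powr (5 / \<epsilon>)) * real (n + 1)}"
  have ptw: "indicator Bd Q \<le> exp t0 * exp (- real (X Q))" if Q: "Q \<in> set_pmf (offspring P)" for Q
  proof (cases "Q \<in> Bd")
    case True
    have lq: "\<forall>y\<in>set Q. length y = n" using set_offspring[OF lenx npos Q] .
    let ?U = "{k\<in>K. k \<notin> ones ` set Q}"
    have Usub: "?U \<subseteq> {0..n}" unfolding K_def M_def by auto
    have "ones ` set (P @ Q) \<subseteq> {0..n} - ?U"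
      using lenx lq ones_le unfolding K_def M_def S_def by fastforce
    then have "card (ones ` set (P @ Q)) \<le> card ({0..n} - ?U)" by (intro card_mono) auto
    also have "\<dots> = (n + 1) - X Q" unfolding X_def using Usub
      by (subst card_Diff_subset) (auto intro: finite_subset)
    finally have c: "card (ones ` set (P @ Q)) \<le> (n + 1) - X Q" .
    have XQ: "X Q \<le> n + 1" unfolding X_def using card_mono[OF _ Usub] by simp
    have "real (card (ones ` set (P @ Q))) \<le> real (n + 1) - real (X Q)"
      using c XQ by (metis of_nat_diff of_nat_le_iff)
    moreover have "(1 - \<epsilon> / 10 * b powr (5 / \<epsilon>)) * real (n + 1) < real (card (ones ` set (P @ Q)))"
      using True unfolding Bd_def b_def num_fvals_eq by simp
    moreover have "(1 - \<epsilon> / 10 * b powr (5 / \<epsilon>)) * real (n + 1) = real (n + 1) - t0"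
      unfolding t0_def by (simp add: algebra_simps)
    ultimately have "real (X Q) < t0" by linarith
    then have "1 \<le> exp (t0 - real (X Q))" by simp
    also have "exp (t0 - real (X Q)) = exp t0 * exp (- real (X Q))"
      by (simp add: exp_add[symmetric])
    finally show ?thesis using True by simp
  qed simp
  have probBd: "measure_pmf.prob (offspring P) Bd \<le> exp (t0 - real (card K) * B / 2)"
  proof -
    have "measure_pmf.prob (offspring P) Bd = measure_pmf.expectation (offspring P) (indicator Bd)"
      by simp
    also have "\<dots> \<le> measure_pmf.expectation (offspring P) (\<lambda>Q. exp t0 * exp (- real (X Q)))"
    proof (rule integral_mono_AE)
      show "integrable (measure_pmf (offspring P)) (indicat_real Bd)"
        by (rule measure_pmf.integrable_const_bound[where B=1]) auto
      show "integrable (measure_pmf (offspring P)) (\<lambda>Q. exp t0 * exp (- real (X Q)))"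
        by (rule measure_pmf.integrable_const_bound[where B="exp t0"]) auto
      show "AE Q in measure_pmf (offspring P). indicat_real Bd Q \<le> exp t0 * exp (- real (X Q))"
        by (rule AE_pmfI) (rule ptw)
    qed
    also have "\<dots> = exp t0 * measure_pmf.expectation (offspring P) (\<lambda>Q. exp (- real (X Q)))"
      by simp
    also have "\<dots> \<le> exp t0 * exp (- (real (card K) * B / 2))"
      using EX by (intro mult_left_mono) auto
    also have "\<dots> = exp (t0 - real (card K) * B / 2)" by (simp add: exp_add[symmetric])
    finally show ?thesis .
  qed
  have expo: "t0 - real (card K) * B / 2 \<le> - (\<epsilon> * (\<epsilon> / 10) ^ T / 40) * real n"
  proof -
    have T4: "real T \<le> 4 / \<epsilon> + 1"
    proof -
      have "0 \<le> 4 / \<epsilon>" using e0 by simp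
      moreover have "4 / \<epsilon> \<le> real_of_int \<lceil>4 / \<epsilon>\<rceil>" by (rule le_of_int_ceiling)
      ultimately have c0: "0 \<le> \<lceil>4 / \<epsilon>\<rceil>" by linarith
      have "real T = real_of_int \<lceil>4 / \<epsilon>\<rceil>" unfolding Tdef
        using of_nat_nat[OF c0] by metis
      also have "\<dots> \<le> 4 / \<epsilon> + 1" by (rule of_int_ceiling_le_add_one)
      finally show ?thesis .
    qed
    have "2 \<le> 1 / \<epsilon>" using e0 e1 by (simp add: field_simps)
    then have ge1: "1 \<le> 5 / \<epsilon> - real T" using T4 by (simp add: field_simps) 
    have "b powr (5 / \<epsilon>) = b powr (real T + (5 / \<epsilon> - real T))" by simp
    also have "\<dots> = B * b powr (5 / \<epsilon> - real T)"
      unfolding B_def powr_add using bpos by (simp add: powr_realpow)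
    also have "\<dots> \<le> B * b"
      using powr_le_one_le[OF bpos _ ge1] b1 Bpos by (intro mult_left_mono) auto
    also have "\<dots> \<le> B * (\<epsilon> / 5)" using bu Bpos by (intro mult_left_mono) auto
    finally have bp: "b powr (5 / \<epsilon>) \<le> B * (\<epsilon> / 5)" .
    have "t0 \<le> \<epsilon> / 10 * (B * (\<epsilon> / 5)) * real (n + 1)"
      unfolding t0_def using bp e0 by (intro mult_right_mono mult_left_mono) auto
    also have "\<dots> = \<epsilon> * B * real (n + 1) * (\<epsilon> / 50)" by (simp add: field_simps)
    also have "\<dots> \<le> \<epsilon> * B * real (n + 1) * (1 / 40)"
      using e0 e1 Bpos by (intro mult_left_mono) auto
    finally have t0b: "t0 \<le> \<epsilon> * B * real (n + 1) / 40" by simp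
    have "\<epsilon> * real (n + 1) / 10 * B \<le> real (card K) * B"
      using cardK Bpos by (intro mult_right_mono) auto
    then have "t0 - real (card K) * B / 2 \<le> - (\<epsilon> * B * real (n + 1) / 40)"
      using t0b by (simp add: field_simps)
    also have "\<dots> \<le> - (\<epsilon> * B * real n / 40)"
      using e0 Bpos by (simp add: field_simps)
    also have "\<dots> \<le> - (\<epsilon> * (\<epsilon> / 10) ^ T * real n / 40)"
    proof -
      have "(\<epsilon> / 10) ^ T \<le> B" unfolding B_def using bl e0 by (intro power_mono) auto
      then have "\<epsilon> * (\<epsilon> / 10) ^ T * real n \<le> \<epsilon> * B * real n"
        using e0 nr by (intro mult_right_mono mult_left_mono) auto
      then show ?thesis by simp
    qed
    finally show ?thesis by simp
  qed
  have "measure_pmf.prob (offspring P) Bd \<le> exp (- (\<epsilon> * (\<epsilon> / 10) ^ T / 40) * real n)"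
    using probBd expo by (meson exp_le_cancel_iff order_trans)
  moreover have "measure_pmf.prob (offspring P)
           {Q. real (num_fvals n (P @ Q))
                 \<le> (1 - \<epsilon> / 10 * (\<epsilon> / 5 - 2 / real n) powr (5 / \<epsilon>)) * real (n + 1)}
        = 1 - measure_pmf.prob (offspring P) Bd"
  proof -
    have "{Q. real (num_fvals n (P @ Q))
                 \<le> (1 - \<epsilon> / 10 * (\<epsilon> / 5 - 2 / real n) powr (5 / \<epsilon>)) * real (n + 1)} = UNIV - Bd"
      unfolding Bd_def by auto
    then show ?thesis using measure_pmf.prob_compl[of Bd "offspring P"] by simp
  qed
  ultimately show ?thesis by simp
qed



theorem lemma10:
  shows "\<exists>\<epsilon>\<^sub>0::real. 0 < \<epsilon>\<^sub>0 \<and> \<epsilon>\<^sub>0 < 1 \<and>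
    (\<forall>\<epsilon>::real. 0 < \<epsilon> \<and> \<epsilon> < \<epsilon>\<^sub>0 \<longrightarrow>
      (\<exists>c::real. c > 0 \<and> (\<exists>n\<^sub>0::nat. \<forall>n \<ge> n\<^sub>0. \<forall>P :: bool list list.
         length P = n + 1 \<longrightarrow> (\<forall>x \<in> set P. length x = n) \<longrightarrow>
         real (num_fvals n P) \<le> (1 - \<epsilon>) * real (n + 1) \<longrightarrow>
         measure_pmf.prob (offspring P)
           {Q. real (num_fvals n (P @ Q))
                 \<le> (1 - \<epsilon> / 10 * (\<epsilon> / 5 - 2 / real n) powr (5 / \<epsilon>)) * real (n + 1)}
           \<ge> 1 - exp (- c * real n))))"
proof (rule exI[of _ "1/2::real"], intro conjI allI impI)
  fix \<epsilon> :: real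
  assume e: "0 < \<epsilon> \<and> \<epsilon> < 1/2"
  define T where "T = nat \<lceil>4 / \<epsilon>\<rceil>"
  show "\<exists>c::real. c > 0 \<and> (\<exists>n\<^sub>0::nat. \<forall>n \<ge> n\<^sub>0. \<forall>P :: bool list list.
         length P = n + 1 \<longrightarrow> (\<forall>x \<in> set P. length x = n) \<longrightarrow>
         real (num_fvals n P) \<le> (1 - \<epsilon>) * real (n + 1) \<longrightarrow>
         measure_pmf.prob (offspring P)
           {Q. real (num_fvals n (P @ Q))
                 \<le> (1 - \<epsilon> / 10 * (\<epsilon> / 5 - 2 / real n) powr (5 / \<epsilon>)) * real (n + 1)}
           \<ge> 1 - exp (- c * real n))"
  proof -
    have cpos: "0 < \<epsilon> * (\<epsilon> / 10) ^ T / 40" using e by simp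
    have main: "\<forall>n \<ge> nat \<lceil>20 / \<epsilon>\<rceil>. \<forall>P :: bool list list.
         length P = n + 1 \<longrightarrow> (\<forall>x \<in> set P. length x = n) \<longrightarrow>
         real (num_fvals n P) \<le> (1 - \<epsilon>) * real (n + 1) \<longrightarrow>
         measure_pmf.prob (offspring P)
           {Q. real (num_fvals n (P @ Q))
                 \<le> (1 - \<epsilon> / 10 * (\<epsilon> / 5 - 2 / real n) powr (5 / \<epsilon>)) * real (n + 1)}
           \<ge> 1 - exp (- (\<epsilon> * (\<epsilon> / 10) ^ T / 40) * real n)"
    proof (intro allI impI)
      fix n :: nat and P :: "bool list list"
      assume n: "nat \<lceil>20 / \<epsilon>\<rceil> \<le> n"
        and a1: "length P = n + 1" and a2: "\<forall>x \<in> set P. length x = n"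
        and a3: "real (num_fvals n P) \<le> (1 - \<epsilon>) * real (n + 1)"
      have "20 / \<epsilon> \<le> real (nat \<lceil>20 / \<epsilon>\<rceil>)" by (rule real_nat_ceiling_ge)
      also have "\<dots> \<le> real n" using n by simp
      finally have nl: "20 / \<epsilon> \<le> real n" .
      show "measure_pmf.prob (offspring P)
           {Q. real (num_fvals n (P @ Q))
                 \<le> (1 - \<epsilon> / 10 * (\<epsilon> / 5 - 2 / real n) powr (5 / \<epsilon>)) * real (n + 1)}
           \<ge> 1 - exp (- (\<epsilon> * (\<epsilon> / 10) ^ T / 40) * real n)"
        by (rule core[OF _ _ T_def nl a1 a2 a3]) (use e in auto)
    qed
    show ?thesis using cpos main by blast
  qed
qed simp_all

end
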